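(* Let $J_{ab}$ be a non-degenerate skew form on a real vector space of dimension $2n$ with $n\geq 2$, with inverse $J^{ab}$. Suppose $T_{abcd}$ is a tensor with $T_{abcd}=T_{[ab][cd]}$ and $T_{[abc]d}=J_{[ab}\psi_{c]d}$ for some tensor $\psi_{cd}$. Then there are unique tensors $\rho_{ab}$ (no symmetry assumed), $\tau_{ab}=\tau_{[ab]}$, and $X_{abcd}$ with $X_{abcd}=X_{[ab][cd]}$, $X_{[abc]d}=0$ and $J^{ab}X_{abcd}=0$, such that $$T_{abcd}=X_{abcd}+J_{c[a}\rho_{b]d}-J_{d[a}\rho_{b]c}-J_{cd}\rho_{[ab]}+J_{ab}\tau_{cd}.$$
   Context: Abstract index notation; square brackets denote skew-symmetrisation over the enclosed indices. *)

theory Defs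
  imports Complex_Main "HOL-Library.Cardinality"
begin

text \<open>Tensors on a real vector space V are represented by their components with
respect to a fixed basis of V, indexed by a finite type 'i (so dim V = CARD('i)).\<close>

type_synonym 'i tensor2 = "'i \<Rightarrow> 'i \<Rightarrow> real"
type_synonym 'i tensor4 = "'i \<Rightarrow> 'i \<Rightarrow> 'i \<Rightarrow> 'i \<Rightarrow> real"

definition skew2 :: "'i tensor2 \<Rightarrow> bool" where
  "skew2 F \<longleftrightarrow> (\<forall>a b. F a b = - F b a)"

definition alt2 :: "'i tensor2 \<Rightarrow> 'i tensor2" where
  "alt2 F a b = (F a b - F b a) / 2"

definition skew_pairs :: "'i tensor4 \<Rightarrow> bool" where
  "skew_pairs F \<longleftrightarrow> (\<forall>a b c d. F a b c d = - F b a c d \<and> F a b c d = - F a b d c)"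

definition alt3 :: "'i tensor4 \<Rightarrow> 'i tensor4" where
  "alt3 F a b c d =
     (F a b c d - F b a c d + F b c a d - F c b a d + F c a b d - F a c b d) / 6"

definition nondegenerate :: "('i::finite) tensor2 \<Rightarrow> bool" where
  "nondegenerate J \<longleftrightarrow> (\<forall>v. (\<forall>b. (\<Sum>a\<in>UNIV. v a * J a b) = 0) \<longrightarrow> v = (\<lambda>_. 0))"

definition is_inverse :: "('i::finite) tensor2 \<Rightarrow> 'i tensor2 \<Rightarrow> bool" where
  "is_inverse J K \<longleftrightarrow>
     (\<forall>a c. (\<Sum>b\<in>UNIV. K a b * J b c) = (if a = c then 1 else 0)) \<and>
     (\<forall>a c. (\<Sum>b\<in>UNIV. J a b * K b c) = (if a = c then 1 else 0))"

end

theory Submission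
  imports Defs
begin

definition ctr :: "('i::finite) tensor2 \<Rightarrow> 'i tensor2 \<Rightarrow> real" where
  "ctr K F = (\<Sum>a\<in>UNIV. \<Sum>b\<in>UNIV. K a b * F a b)"

lemma ctr_add[simp]: "ctr K (\<lambda>a b. F a b + G a b) = ctr K F + ctr K G"
  by (simp add: ctr_def ring_distribs sum.distrib)
lemma ctr_diff[simp]: "ctr K (\<lambda>a b. F a b - G a b) = ctr K F - ctr K G"
  by (simp add: ctr_def ring_distribs sum_subtractf)
lemma ctr_uminus[simp]: "ctr K (\<lambda>a b. - F a b) = - ctr K F"
  by (simp add: ctr_def sum_negf)
lemma ctr_cmult[simp]: "ctr K (\<lambda>a b. x * F a b) = x * ctr K F"
  by (simp add: ctr_def sum_distrib_left mult_ac)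
lemma ctr_multc[simp]: "ctr K (\<lambda>a b. F a b * x) = ctr K F * x"
  by (simp add: ctr_def sum_distrib_right mult_ac)
lemma ctr_divc[simp]: "ctr K (\<lambda>a b. F a b / x) = ctr K F / x"
  by (simp add: ctr_def sum_divide_distrib)

lemma if01_mult[simp]: "(if P then 1 else 0) * (x::real) = (if P then x else 0)"
  by simp
lemma mult_if01[simp]: "(x::real) * (if P then 1 else 0) = (if P then x else 0)"
  by simp

definition Sf :: "'i tensor2 \<Rightarrow> 'i tensor2 \<Rightarrow> 'i tensor2 \<Rightarrow> 'i tensor4" where
  "Sf J \<rho> \<tau> a b c d = (J c a * \<rho> b d - J c b * \<rho> a d) / 2 - (J d a * \<rho> b c - J d b * \<rho> a c) / 2
     - J c d * alt2 \<rho> a b + J a b * \<tau> c d"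

locale sympl =
  fixes J K :: "('i::finite) tensor2"
  assumes Jsk: "\<And>a b. J a b = - J b a"
    and KJ: "\<And>a c. (\<Sum>b\<in>UNIV. K a b * J b c) = (if a = c then 1 else 0)"
    and JK: "\<And>a c. (\<Sum>b\<in>UNIV. J a b * K b c) = (if a = c then 1 else 0)"
begin

lemma Ksk: "K a b = - K b a"
proof -
  have "K a b = (\<Sum>c\<in>UNIV. (if b = c then 1 else 0) * K a c)" by (simp add: sum.delta)
  also have "\<dots> = (\<Sum>c\<in>UNIV. (\<Sum>e\<in>UNIV. K b e * J e c) * K a c)" by (simp add: KJ)
  also have "\<dots> = (\<Sum>c\<in>UNIV. \<Sum>e\<in>UNIV. K b e * J e c * K a c)" by (simp add: sum_distrib_right)
  also have "\<dots> = (\<Sum>e\<in>UNIV. \<Sum>c\<in>UNIV. K b e * J e c * K a c)" by (rule sum.swap)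
  also have "\<dots> = (\<Sum>e\<in>UNIV. K b e * (- (\<Sum>c\<in>UNIV. K a c * J c e)))"
  proof (rule sum.cong[OF refl])
    fix e
    have "(\<Sum>c\<in>UNIV. K b e * J e c * K a c) = K b e * (\<Sum>c\<in>UNIV. - (K a c * J c e))"
      by (simp add: sum_distrib_left mult_ac Jsk[of e])
    also have "\<dots> = K b e * (- (\<Sum>c\<in>UNIV. K a c * J c e))" by (simp add: sum_negf)
    finally show "(\<Sum>c\<in>UNIV. K b e * J e c * K a c) = K b e * (- (\<Sum>c\<in>UNIV. K a c * J c e))" .
  qed
  also have "\<dots> = - K b a" by (simp add: KJ sum_negf)
  finally show ?thesis .
qed

lemma ctr_J[simp]: "ctr K J = - real CARD('i)"
proof -
  have "ctr K J = (\<Sum>a\<in>UNIV. - (\<Sum>b\<in>UNIV. K a b * J b a))"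
    unfolding ctr_def
  proof (rule sum.cong[OF refl])
    fix a
    have "\<And>b. K a b * J a b = - (K a b * J b a)" by (simp add: Jsk[of a])
    then show "(\<Sum>b\<in>UNIV. K a b * J a b) = - (\<Sum>b\<in>UNIV. K a b * J b a)"
      by (simp add: sum_negf)
  qed
  also have "\<dots> = - real CARD('i)" by (simp add: KJ)
  finally show ?thesis .
qed

lemma ctr_Jt[simp]: "ctr K (\<lambda>a b. J b a) = real CARD('i)"
  unfolding ctr_def by (simp add: KJ)

lemma ctr_J1[simp]: "ctr K (\<lambda>a b. J b c * f a) = f c"
proof -
  have "ctr K (\<lambda>a b. J b c * f a) = (\<Sum>a\<in>UNIV. (\<Sum>b\<in>UNIV. K a b * J b c) * f a)"
    unfolding ctr_def by (simp add: sum_distrib_right sum_distrib_left mult_ac)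
  also have "\<dots> = f c" by (simp add: KJ sum.delta)
  finally show ?thesis .
qed

lemma ctr_J2[simp]: "ctr K (\<lambda>a b. J c b * f a) = - f c"
proof -
  have "ctr K (\<lambda>a b. J c b * f a) = ctr K (\<lambda>a b. - (J b c * f a))"
    by (subst Jsk) simp
  then show ?thesis by simp
qed

lemma ctr_J3[simp]: "ctr K (\<lambda>a b. J c a * f b) = f c"
proof -
  have "ctr K (\<lambda>a b. J c a * f b) = (\<Sum>b\<in>UNIV. \<Sum>a\<in>UNIV. K a b * (J c a * f b))"
    unfolding ctr_def by (rule sum.swap)
  also have "\<dots> = (\<Sum>b\<in>UNIV. (\<Sum>a\<in>UNIV. J c a * K a b) * f b)"
    by (simp add: sum_distrib_right sum_distrib_left mult_ac)
  also have "\<dots> = f c" by (simp add: JK sum.delta)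
  finally show ?thesis .
qed

lemma ctr_J4[simp]: "ctr K (\<lambda>a b. J a c * f b) = - f c"
proof -
  have "ctr K (\<lambda>a b. J a c * f b) = ctr K (\<lambda>a b. - (J c a * f b))"
    by (subst Jsk) simp
  then show ?thesis by simp
qed

lemma ctr_swap: "ctr K (\<lambda>a b. F b a) = - ctr K F"
proof -
  have "ctr K (\<lambda>a b. F b a) = (\<Sum>b\<in>UNIV. \<Sum>a\<in>UNIV. K a b * F b a)"
    unfolding ctr_def by (rule sum.swap)
  also have "\<dots> = (\<Sum>b\<in>UNIV. \<Sum>a\<in>UNIV. - (K b a * F b a))"
    by (rule sum.cong[OF refl], rule sum.cong[OF refl]) (metis Ksk minus_mult_left)
  also have "\<dots> = - ctr K F" by (simp add: ctr_def sum_negf)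
  finally show ?thesis .
qed

lemma ctr_alt2[simp]: "ctr K (alt2 F) = ctr K F"
proof -
  have "ctr K (alt2 F) = ctr K (\<lambda>a b. (F a b - F b a) / 2)" by (simp add: alt2_def[abs_def])
  also have "\<dots> = (ctr K F - ctr K (\<lambda>a b. F b a)) / 2" by simp
  also have "\<dots> = ctr K F" by (simp add: ctr_swap[of F])
  finally show ?thesis .
qed

lemma ctr_S: "ctr K (\<lambda>a b. Sf J \<rho> \<tau> a b c d) = \<rho> c d - \<rho> d c - J c d * ctr K \<rho> - real CARD('i) * \<tau> c d"
  by (simp add: Sf_def algebra_simps)

lemma alt3_S: "alt3 (Sf J \<rho> \<tau>) a b c d = alt3 (\<lambda>a b c d. J a b * (\<rho> c d + \<tau> c d)) a b c d"
proof -
  have e: "J b a = - J a b" "J c a = - J a c" "J c b = - J b c" "J d a = - J a d" "J d b = - J b d" "J d c = - J c d"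
    by (rule Jsk)+
  show ?thesis unfolding alt3_def Sf_def alt2_def e by (simp add: field_simps)
qed

lemma alt3_J_zero:
  assumes z: "\<And>a b c d. alt3 (\<lambda>a b c d. J a b * \<mu> c d) a b c d = 0" and N: "CARD('i) \<noteq> 2"
  shows "\<mu> c d = 0"
proof -
  have "ctr K (\<lambda>a b. alt3 (\<lambda>a b c d. J a b * \<mu> c d) a b c d) = (4 - 2 * real CARD('i)) / 6 * \<mu> c d"
    by (simp add: alt3_def algebra_simps)
  moreover have "ctr K (\<lambda>a b. alt3 (\<lambda>a b c d. J a b * \<mu> c d) a b c d) = 0"
    by (simp add: z ctr_def)
  ultimately have "(4 - 2 * real CARD('i)) * \<mu> c d = 0" by simp
  moreover have "4 - 2 * real CARD('i) \<noteq> 0" using N by simp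
  ultimately show ?thesis by simp
qed

lemma main:
  fixes T :: "'i tensor4" and \<psi> :: "'i tensor2"
  assumes N: "CARD('i) \<noteq> 2"
    and Tsym: "skew_pairs T"
    and Tb: "alt3 T = alt3 (\<lambda>a b c d. J a b * \<psi> c d)"
  shows "\<exists>!(\<rho>, \<tau>, X).
           skew2 (\<tau> :: 'i tensor2) \<and>
           skew_pairs (X :: 'i tensor4) \<and>
           alt3 X = (\<lambda>a b c d. 0) \<and>
           (\<forall>c d. (\<Sum>a\<in>UNIV. \<Sum>b\<in>UNIV. K a b * X a b c d) = 0) \<and>
           (\<forall>a b c d. T a b c d =
               X a b c d
               + (J c a * \<rho> b d - J c b * \<rho> a d) / 2
               - (J d a * \<rho> b c - J d b * \<rho> a c) / 2
               - J c d * alt2 (\<rho> :: 'i tensor2) a b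
               + J a b * \<tau> c d)"
proof -
  define Nr where "Nr = real CARD('i)"
  have Npos: "Nr > 0" unfolding Nr_def by simp
  define t where "t c d = ctr K (\<lambda>a b. T a b c d)" for c d
  define u where "u c d = t c d + Nr * alt2 \<psi> c d" for c d
  define mu where "mu = ctr K u"
  define \<alpha>0 where "\<alpha>0 c d = (u c d + J c d * (mu / (2 * Nr + 2))) / (Nr + 2)" for c d
  define \<rho>0 where "\<rho>0 c d = (\<psi> c d + \<psi> d c) / 2 + \<alpha>0 c d" for c d
  define \<tau>0 where "\<tau>0 c d = \<psi> c d - \<rho>0 c d" for c d
  define X0 where "X0 a b c d = T a b c d - Sf J \<rho>0 \<tau>0 a b c d" for a b c d
  have Tall: "\<forall>a b c d. T a b c d = - T b a c d \<and> T a b c d = - T a b d c"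
    using Tsym unfolding skew_pairs_def .
  have Tab: "T b a c d = - T a b c d" "T a b d c = - T a b c d" for a b c d
    using Tall[rule_format, of a b c d] by linarith+
  have tsk: "t d c = - t c d" for c d
  proof -
    have "(\<lambda>a b. T a b d c) = (\<lambda>a b. - T a b c d)" by (intro ext) (rule Tab(2))
    then show ?thesis unfolding t_def by (simp only: ctr_uminus)
  qed
  have usk: "u d c = - u c d" for c d
    unfolding u_def alt2_def by (simp add: tsk[where c=c and d=d] field_simps)
  have ask: "\<alpha>0 d c = - \<alpha>0 c d" for c d
    unfolding \<alpha>0_def by (simp add: usk[where c=c and d=d] Jsk[of d c] add_divide_distrib diff_divide_distrib)
  have \<tau>0sk: "\<tau>0 d c = - \<tau>0 c d" for c d
    unfolding \<tau>0_def \<rho>0_def by (simp add: ask[where c=c and d=d] field_simps)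
  have \<rho>\<tau>0: "(\<lambda>c d. \<rho>0 c d + \<tau>0 c d) = \<psi>" unfolding \<tau>0_def by simp
  have ctr\<rho>0: "ctr K \<rho>0 = mu / (2 * Nr + 2)"
  proof -
    have "ctr K \<rho>0 = ctr K (\<lambda>a b. (\<psi> a b + \<psi> b a) / 2 + \<alpha>0 a b)"
      unfolding \<rho>0_def by simp
    also have "\<dots> = ctr K \<alpha>0" by (simp add: ctr_swap[of \<psi>])
    also have "\<dots> = (mu + (- Nr) * (mu / (2 * Nr + 2))) / (Nr + 2)"
      unfolding \<alpha>0_def by (simp add: mu_def Nr_def)
    also have "\<dots> = mu / (2 * Nr + 2)"
      using Npos apply (subgoal_tac "2 * Nr + 2 \<noteq> 0 \<and> Nr + 2 \<noteq> 0")
       apply (simp add: divide_simps)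
       apply (simp add: algebra_simps)
      by simp
    finally show ?thesis .
  qed
  define P where "P = (\<lambda>(\<rho>, \<tau>, X).
           skew2 (\<tau> :: 'i tensor2) \<and>
           skew_pairs (X :: 'i tensor4) \<and>
           alt3 X = (\<lambda>a b c d. 0) \<and>
           (\<forall>c d. (\<Sum>a\<in>UNIV. \<Sum>b\<in>UNIV. K a b * X a b c d) = 0) \<and>
           (\<forall>a b c d. T a b c d =
               X a b c d
               + (J c a * \<rho> b d - J c b * \<rho> a d) / 2
               - (J d a * \<rho> b c - J d b * \<rho> a c) / 2
               - J c d * alt2 (\<rho> :: 'i tensor2) a b
               + J a b * \<tau> c d))"
  have ex: "P (\<rho>0, \<tau>0, X0)"
  proof -
    have s1: "skew2 \<tau>0" unfolding skew2_def
      using \<tau>0sk by (intro allI) (rule \<tau>0sk)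
    have s2: "skew_pairs X0"
      unfolding skew_pairs_def
    proof (intro allI conjI)
      fix a b c d
      have e: "J b a = - J a b" "J d c = - J c d" by (rule Jsk)+
      show "X0 a b c d = - X0 b a c d"
        unfolding X0_def Sf_def alt2_def e Tab(1)[where a=b and b=a]
        by (simp add: field_simps)
      show "X0 a b c d = - X0 a b d c"
        unfolding X0_def Sf_def alt2_def e Tab(2)[where c=d and d=c] \<tau>0sk[where c=c and d=d]
        by (simp add: field_simps)
    qed
    have s3: "alt3 X0 = (\<lambda>a b c d. 0)"
    proof (intro ext)
      fix a b c d
      have "alt3 X0 a b c d = alt3 T a b c d - alt3 (Sf J \<rho>0 \<tau>0) a b c d"
        unfolding alt3_def X0_def by (simp add: field_simps)
      also have "\<dots> = 0" unfolding alt3_S Tb by (simp add: \<tau>0_def)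
      finally show "alt3 X0 a b c d = 0" .
    qed
    have s4: "(\<Sum>a\<in>UNIV. \<Sum>b\<in>UNIV. K a b * X0 a b c d) = 0" for c d
    proof -
      have "(\<Sum>a\<in>UNIV. \<Sum>b\<in>UNIV. K a b * X0 a b c d) = ctr K (\<lambda>a b. X0 a b c d)"
        by (simp add: ctr_def)
      also have "\<dots> = t c d - (\<rho>0 c d - \<rho>0 d c - J c d * ctr K \<rho>0 - Nr * \<tau>0 c d)"
        unfolding X0_def by (simp add: ctr_S t_def Nr_def)
      also have "\<dots> = 0"
      proof -
        have f1: "\<rho>0 c d - \<rho>0 d c = 2 * \<alpha>0 c d"
          unfolding \<rho>0_def ask[where c=c and d=d] by simp
        have f2: "\<tau>0 c d = alt2 \<psi> c d - \<alpha>0 c d"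
          unfolding \<tau>0_def \<rho>0_def alt2_def by (simp add: field_simps)
        have f3: "(Nr + 2) * \<alpha>0 c d = u c d + J c d * (mu / (2 * Nr + 2))"
          unfolding \<alpha>0_def using Npos by simp
        have f4: "u c d = t c d + Nr * alt2 \<psi> c d" by (rule u_def)
        show ?thesis unfolding ctr\<rho>0 f2
          using f1 f3 f4 by (simp add: algebra_simps)
      qed
      finally show ?thesis .
    qed
    show ?thesis unfolding P_def using s1 s2 s3 s4 by (simp add: X0_def Sf_def)
  qed
  have uniq: "y = (\<rho>0, \<tau>0, X0)" if Py: "P y" for y
  proof -
    obtain \<rho> \<tau> X where y: "y = (\<rho>, \<tau>, X)" by (cases y) auto
    have h1: "skew2 \<tau>" and h3: "alt3 X = (\<lambda>a b c d. 0)"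
      and h4: "\<And>c d. (\<Sum>a\<in>UNIV. \<Sum>b\<in>UNIV. K a b * X a b c d) = 0"
      and h5: "\<And>a b c d. T a b c d =
               X a b c d
               + (J c a * \<rho> b d - J c b * \<rho> a d) / 2
               - (J d a * \<rho> b c - J d b * \<rho> a c) / 2
               - J c d * alt2 \<rho> a b
               + J a b * \<tau> c d"
      using Py unfolding y P_def by auto
    have e1: "T a b c d = X a b c d + Sf J \<rho> \<tau> a b c d" for a b c d
      unfolding h5 Sf_def by simp
    have e2: "alt3 (\<lambda>a b c d. J a b * (\<rho> c d + \<tau> c d - \<psi> c d)) a b c d = 0" for a b c d
    proof -
      have "alt3 T a b c d = alt3 X a b c d + alt3 (Sf J \<rho> \<tau>) a b c d"
        unfolding alt3_def e1 by (simp add: field_simps)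
      then have "alt3 (\<lambda>a b c d. J a b * \<psi> c d) a b c d
                 = alt3 (\<lambda>a b c d. J a b * (\<rho> c d + \<tau> c d)) a b c d"
        unfolding Tb h3 alt3_S by simp
      moreover have "alt3 (\<lambda>a b c d. J a b * (\<rho> c d + \<tau> c d - \<psi> c d)) a b c d
          = alt3 (\<lambda>a b c d. J a b * (\<rho> c d + \<tau> c d)) a b c d - alt3 (\<lambda>a b c d. J a b * \<psi> c d) a b c d"
        unfolding alt3_def by (simp add: field_simps)
      ultimately show ?thesis by simp
    qed
    have e3: "\<tau> c d = \<psi> c d - \<rho> c d" for c d
      using alt3_J_zero[OF e2 N, of c d] by simp
    have e4: "t c d = \<rho> c d - \<rho> d c - J c d * ctr K \<rho> - Nr * \<tau> c d" for c d
    proof -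
      have "t c d = ctr K (\<lambda>a b. X a b c d) + ctr K (\<lambda>a b. Sf J \<rho> \<tau> a b c d)"
        unfolding t_def e1 by simp
      also have "ctr K (\<lambda>a b. X a b c d) = 0" using h4 by (simp add: ctr_def)
      finally show ?thesis by (simp add: ctr_S Nr_def)
    qed
    have \<tau>sk: "\<tau> d c = - \<tau> c d" for c d
      using h1[unfolded skew2_def, rule_format, of d c] .
    have e6: "(Nr + 2) * alt2 \<rho> c d - J c d * ctr K \<rho> = u c d" for c d
    proof -
      have a: "t c d = \<rho> c d - \<rho> d c - J c d * ctr K \<rho> - Nr * (\<psi> c d - \<rho> c d)"
        using e4[of c d] e3[of c d] by simp
      have b: "- t c d = \<rho> d c - \<rho> c d + J c d * ctr K \<rho> - Nr * (\<psi> d c - \<rho> d c)"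
        using e4[of d c] e3[of d c] tsk[where c=c and d=d] Jsk[of d c] by simp
      show ?thesis unfolding u_def alt2_def using a b by (simp add: field_simps; linarith)
    qed
    have e7: "ctr K \<rho> = mu / (2 * Nr + 2)"
    proof -
      have "ctr K (\<lambda>c d. (Nr + 2) * alt2 \<rho> c d - J c d * ctr K \<rho>) = ctr K u"
        using e6 by simp
      then have "(Nr + 2) * ctr K \<rho> + Nr * ctr K \<rho> = mu"
        by (simp add: mu_def Nr_def)
      then show ?thesis using Npos by (simp add: field_simps)
    qed
    have e8: "alt2 \<rho> c d = \<alpha>0 c d" for c d
    proof -
      have "(Nr + 2) * alt2 \<rho> c d = u c d + J c d * (mu / (2 * Nr + 2))"
        using e6[of c d] unfolding e7 by linarith
      moreover have "Nr + 2 \<noteq> 0" using Npos by simp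
      ultimately show ?thesis unfolding \<alpha>0_def by (simp add: eq_divide_eq mult.commute)
    qed
    have e9: "\<rho> c d = \<rho>0 c d" for c d
    proof -
      have "\<rho> c d + \<rho> d c = \<psi> c d + \<psi> d c" using e3[of c d] e3[of d c] \<tau>sk[where c=c and d=d] by simp
      then show ?thesis using e8[of c d] unfolding \<rho>0_def alt2_def by (simp add: field_simps)
    qed
    have r: "\<rho> = \<rho>0" using e9 by auto
    have ta: "\<tau> = \<tau>0" using e3 r unfolding \<tau>0_def by auto
    have x: "X = X0" using e1 r ta unfolding X0_def by (auto simp: algebra_simps)
    show ?thesis using y r ta x by simp
  qed
  have "\<exists>!y. P y" using ex uniq by blast
  then show ?thesis unfolding P_def .
qed

end

theorem lemma14:
  fixes n :: nat
    and J Jinv :: "('i::finite) tensor2"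
    and T :: "'i tensor4"
  assumes dim: "CARD('i) = 2 * n" and n2: "n \<ge> 2"
    and Jskew: "skew2 J" and Jnd: "nondegenerate J"
    and Jinv: "is_inverse J Jinv"
    and Tsym: "skew_pairs T"
    and Tbianchi: "\<exists>\<psi> :: 'i tensor2.
                     alt3 T = alt3 (\<lambda>a b c d. J a b * \<psi> c d)"
  shows "\<exists>!(\<rho>, \<tau>, X). \<comment> \<open>types: 'i tensor2, 'i tensor2, 'i tensor4\<close>
           skew2 (\<tau> :: 'i tensor2) \<and>
           skew_pairs (X :: 'i tensor4) \<and>
           alt3 X = (\<lambda>a b c d. 0) \<and>
           (\<forall>c d. (\<Sum>a\<in>UNIV. \<Sum>b\<in>UNIV. Jinv a b * X a b c d) = 0) \<and>
           (\<forall>a b c d. T a b c d =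
               X a b c d
               + (J c a * \<rho> b d - J c b * \<rho> a d) / 2
               - (J d a * \<rho> b c - J d b * \<rho> a c) / 2
               - J c d * alt2 (\<rho> :: 'i tensor2) a b
               + J a b * \<tau> c d)"
proof -
  interpret sympl J Jinv
  proof unfold_locales
    show "\<And>a b. J a b = - J b a" using Jskew[unfolded skew2_def, rule_format] .
    show "\<And>a c. (\<Sum>b\<in>UNIV. Jinv a b * J b c) = (if a = c then 1 else 0)"
      using Jinv[unfolded is_inverse_def, THEN conjunct1, rule_format] .
    show "\<And>a c. (\<Sum>b\<in>UNIV. J a b * Jinv b c) = (if a = c then 1 else 0)"
      using Jinv[unfolded is_inverse_def, THEN conjunct2, rule_format] .
  qed
  obtain \<psi> where psi: "alt3 T = alt3 (\<lambda>a b c d. J a b * \<psi> c d)" using Tbianchi by blast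
  have N: "CARD('i) \<noteq> 2" using dim n2 by simp
  show ?thesis by (rule main[OF N Tsym psi])
qed

end
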